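(* (1) For $0\le t\le2$, $\mathfrak{e}^C_t\in\mathcal{E}(\mathcal{P}^{s+}_{3,5})$. (2) If $0<t\le2$, $t\ne1$, and $f\in\mathcal{P}^{s+}_{3,5}$ satisfies $f(t,1,1)=f(1,1,1)=f(0,1,1)=0$, then $f=\lambda\mathfrak{e}^C_t$ for some $\lambda\ge0$. (3) If $f\in\mathcal{P}^{s+}_{3,5}$ satisfies $f(1,1,1)=f(0,1,1)=f_a(0,1,1)=f_{aa}(0,1,1)=0$, then $f=\lambda\mathfrak{e}^C_0$ for some $\lambda\ge0$. (4) If $f\in\mathcal{P}^{s+}_{3,5}$ satisfies $f(0,1,1)=f(1,1,1)=f_{aa}(1,1,1)=0$, then $f=\lambda\mathfrak{e}^C_1$ for some $\lambda\ge0$.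
   Context: Let $a,b,c$ be variables. For nonnegative integers $m,n$ put $S_{m,n}=a^mb^n+b^mc^n+c^ma^n$, $S_n=S_{n,0}=a^n+b^n+c^n$, $T_{m,n}=S_{m,n}+S_{n,m}$, $U=abc$ (so $S_{1,1}=ab+bc+ca$). Let $\mathcal{H}^s_{3,5}$ be the real vector space of symmetric homogeneous polynomials of degree 5 in $\mathbb{R}[a,b,c]$; it has basis $s_0=S_5-US_{1,1}$, $s_1=T_{4,1}-2US_{1,1}$, $s_2=T_{3,2}-2US_{1,1}$, $s_3=US_2-US_{1,1}$, $s_4=US_{1,1}$. Let $\mathcal{P}^{s+}_{3,5}=\{f\in\mathcal{H}^s_{3,5}: f(a,b,c)\ge 0\text{ for all }a,b,c\ge0\}$. For a closed convex cone $\mathcal{P}$, an element $f\in\mathcal{P}\setminus\{0\}$ is extremal if whenever $f=g+h$ with $g,h\in\mathcal{P}$ we have $g,h\in\mathbb{R}_{\ge0}f$; $\mathcal{E}(\mathcal{P})$ is the set of extremal elements. Subscripts denote partial derivatives: $f_a=\partial f/\partial a$, $f_{aa}=\partial^2f/\partial a^2$, $f_{ab}=\partial^2f/\partial a\partial b$, etc. Family C: $\mathfrak{e}^C_t=s_0-(t+1)s_1+ts_2+(t+1)^2s_3$. *)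

theory Defs
  imports "HOL-Analysis.Analysis"
begin

type_synonym poly3 = "real \<Rightarrow> real \<Rightarrow> real \<Rightarrow> real"

definition S2 :: "nat \<Rightarrow> nat \<Rightarrow> poly3" where
  "S2 m n = (\<lambda>a b c. a^m * b^n + b^m * c^n + c^m * a^n)"

definition T2 :: "nat \<Rightarrow> nat \<Rightarrow> poly3" where
  "T2 m n = (\<lambda>a b c. S2 m n a b c + S2 n m a b c)"

definition U3 :: poly3 where
  "U3 = (\<lambda>a b c. a * b * c)"

definition s0 :: poly3 where "s0 = (\<lambda>a b c. S2 5 0 a b c - U3 a b c * S2 1 1 a b c)"
definition s1 :: poly3 where "s1 = (\<lambda>a b c. T2 4 1 a b c - 2 * U3 a b c * S2 1 1 a b c)"
definition s2 :: poly3 where "s2 = (\<lambda>a b c. T2 3 2 a b c - 2 * U3 a b c * S2 1 1 a b c)"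
definition s3 :: poly3 where "s3 = (\<lambda>a b c. U3 a b c * S2 2 0 a b c - U3 a b c * S2 1 1 a b c)"
definition s4 :: poly3 where "s4 = (\<lambda>a b c. U3 a b c * S2 1 1 a b c)"

text \<open>Symmetric homogeneous quintics, as polynomial functions: the span of the basis s0..s4.\<close>
definition H35s :: "poly3 set" where
  "H35s = {f. \<exists>c0 c1 c2 c3 c4. f = (\<lambda>a b c. c0 * s0 a b c + c1 * s1 a b c + c2 * s2 a b c
                                      + c3 * s3 a b c + c4 * s4 a b c)}"

definition P35splus :: "poly3 set" where
  "P35splus = {f \<in> H35s. \<forall>a b c. 0 \<le> a \<longrightarrow> 0 \<le> b \<longrightarrow> 0 \<le> c \<longrightarrow> 0 \<le> f a b c}"

definition extremals :: "poly3 set \<Rightarrow> poly3 set" where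
  "extremals P = {f \<in> P. f \<noteq> (\<lambda>a b c. 0) \<and>
     (\<forall>g h. g \<in> P \<longrightarrow> h \<in> P \<longrightarrow> f = (\<lambda>a b c. g a b c + h a b c) \<longrightarrow>
        (\<exists>l\<ge>0. g = (\<lambda>a b c. l * f a b c)) \<and> (\<exists>l\<ge>0. h = (\<lambda>a b c. l * f a b c)))}"

definition eC :: "real \<Rightarrow> poly3" where
  "eC t = (\<lambda>a b c. s0 a b c - (t + 1) * s1 a b c + t * s2 a b c + (t + 1)^2 * s3 a b c)"

end

theory Submission
  imports Defs
begin

definition fc :: "real \<Rightarrow> real \<Rightarrow> real \<Rightarrow> real \<Rightarrow> real \<Rightarrow> poly3" where
  "fc c0 c1 c2 c3 c4 = (\<lambda>a b c. c0 * s0 a b c + c1 * s1 a b c + c2 * s2 a b c + c3 * s3 a b c + c4 * s4 a b c)"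

lemma eC_expl: "eC t a b c = a^5+b^5+c^5 - (t+1)*(a^4*b+a*b^4+b^4*c+b*c^4+c^4*a+c*a^4)
   + t*(a^3*b^2+a^2*b^3+b^3*c^2+b^2*c^3+c^3*a^2+c^2*a^3) + (t+1)^2*a*b*c*(a^2+b^2+c^2)
   - (t^2+2*t)*a*b*c*(a*b+b*c+c*a)"
  unfolding eC_def s0_def s1_def s2_def s3_def s4_def S2_def T2_def U3_def
  by algebra

lemma fc_a11: "fc c0 c1 c2 c3 c4 a 1 1 = c0*(a^5-2*a^2-a+2) + c1*(2*a^4-4*a^2+2) + c2*(2*a^3-2*a^2-2*a+2) + c3*(a^3-2*a^2+a) + c4*(2*a^2+a)"
  unfolding fc_def s0_def s1_def s2_def s3_def s4_def S2_def T2_def U3_def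
  apply simp by algebra

lemma fc_001: "fc c0 c1 c2 c3 c4 0 0 1 = c0"
  unfolding fc_def s0_def s1_def s2_def s3_def s4_def S2_def T2_def U3_def by simp

lemma fc_111: "fc c0 c1 c2 c3 c4 1 1 1 = 3*c4"
  by (simp add: fc_a11)

lemma fc_011: "fc c0 c1 c2 c3 c4 0 1 1 = 2*(c0+c1+c2)"
  by (simp add: fc_a11)

lemma fc_factor: "c4 = 0 \<Longrightarrow> c2 = -c0-c1 \<Longrightarrow>
   fc c0 c1 c2 c3 c4 a 1 1 = a*(a-1)^2*(c0*(a+1)^2 + 2*c1*(a+1) + c3)"
  unfolding fc_a11 by algebra

lemma fc_eC0: "fc c0 (-c0*(t+1)) (c0*t) (c0*(t+1)^2) 0 = (\<lambda>a b c. c0 * eC t a b c)"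
  unfolding fc_def eC_def by (intro ext) algebra

lemma fc_eC: "c4 = 0 \<Longrightarrow> c2 = c0*t \<Longrightarrow> c1 = -c0*(t+1) \<Longrightarrow> c3 = c0*(t+1)^2 \<Longrightarrow>
   fc c0 c1 c2 c3 c4 = (\<lambda>a b c. c0 * eC t a b c)"
  using fc_eC0 by simp

lemma fc_H: "fc c0 c1 c2 c3 c4 \<in> H35s"
  unfolding fc_def H35s_def by blast

lemma H_fc: "f \<in> H35s \<Longrightarrow> \<exists>c0 c1 c2 c3 c4. f = fc c0 c1 c2 c3 c4"
  unfolding fc_def H35s_def by blast

lemma eC_fc: "eC t = fc 1 (-(t+1)) t ((t+1)^2) 0"
  using fc_eC0[of 1 t] by simp

lemma P_nonneg: "f \<in> P35splus \<Longrightarrow> 0 \<le> a \<Longrightarrow> 0 \<le> b \<Longrightarrow> 0 \<le> c \<Longrightarrow> 0 \<le> f a b c"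
  unfolding P35splus_def by blast

lemma P_H: "f \<in> P35splus \<Longrightarrow> f \<in> H35s"
  unfolding P35splus_def by blast

lemma lim0:
  fixes \<alpha> \<beta> \<gamma> d :: real
  assumes "0 < d" "\<forall>e. 0 < e \<and> e < d \<longrightarrow> 0 \<le> \<alpha> + \<beta>*e + \<gamma>*e^2"
  shows "0 \<le> \<alpha>"
proof -
  have lim: "((\<lambda>e. \<alpha> + \<beta>*e + \<gamma>*e^2) \<longlongrightarrow> \<alpha> + \<beta>*0 + \<gamma>*0^2) (at_right 0)"
    by (intro tendsto_intros)
  have ev: "eventually (\<lambda>e. 0 \<le> \<alpha> + \<beta>*e + \<gamma>*e^2) (at_right (0::real))"
    using eventually_at_right_real[OF assms(1)] by (rule eventually_mono) (use assms(2) in auto)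
  have "0 \<le> \<alpha> + \<beta>*0 + \<gamma>*0^2"
    by (rule tendsto_le[OF trivial_limit_at_right_real lim tendsto_const ev])
  then show ?thesis by simp
qed

lemma id_plus:
  fixes x y c t :: real
  defines "S \<equiv> x+y" and "k \<equiv> t-1"
  shows "16*S^2*eC t (c+x) (c+y) c = c*(4*x*y*(2*k*c + t*S) + 4*((c*k - S)*(x-y)^2))^2 + 16*S*((c*k - S)*(x-y)^2)^2
     + 4*x*y*(x-y)^2*(4*(c^3*k^2 + c^2*S*k*(3*t-8) + c*S^2*(t-3)^2 + S^3*(2-t)))"
  unfolding eC_expl S_def k_def by algebra

lemma id_minus:
  fixes x y c t :: real
  defines "S \<equiv> x+y" and "k \<equiv> t-1"
  shows "16*S^2*eC t (c+x) (c+y) c = c*(4*x*y*(2*k*c + t*S) - 4*((c*k - S)*(x-y)^2))^2 + 16*S*((c*k - S)*(x-y)^2)^2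
     + 4*x*y*(x-y)^2*(4*(9*c^3*k^2 + c^2*S*k*(7*t-16) + c*S^2*k*(t-9) + S^3*(2-t)))"
  unfolding eC_expl S_def k_def by algebra

lemma Em_nonneg:
  fixes c S t :: real
  assumes "0 \<le> c" "0 \<le> S" "0 \<le> t" "t \<le> 2" "t \<le> 1 \<or> c*(t-1) \<le> S"
  shows "0 \<le> c^3*(t-1)^2 + c^2*S*(t-1)*(3*t-8) + c*S^2*(t-3)^2 + S^3*(2-t)"
proof (cases "t \<le> 1")
  case True
  have "0 \<le> (t-1)*(3*t-8)" using True by (intro mult_nonpos_nonpos) auto
  then have "0 \<le> c^2*S*((t-1)*(3*t-8))" using assms by simp
  moreover have "0 \<le> c^3*(t-1)^2" "0 \<le> c*S^2*(t-3)^2" "0 \<le> S^3*(2-t)" using assms by simp_all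
  ultimately show ?thesis by (simp add: algebra_simps)
next
  case False
  define k where "k = t - 1"
  have k: "0 < k" "k \<le> 1" "c*k \<le> S" using False assms unfolding k_def by auto
  have id: "k*(c^3*(t-1)^2 + c^2*S*(t-1)*(3*t-8) + c*S^2*(t-3)^2 + S^3*(2-t))
     = (S - c*k)*(c*k*((S - c*k) + 3*S*(1-k)) + k*(1-k)*S^2)"
    unfolding k_def by algebra
  have "0 \<le> c*k*((S - c*k) + 3*S*(1-k)) + k*(1-k)*S^2"
    using k assms by (intro add_nonneg_nonneg mult_nonneg_nonneg) auto
  then have "0 \<le> (S - c*k)*(c*k*((S - c*k) + 3*S*(1-k)) + k*(1-k)*S^2)"
    using k by simp
  then show ?thesis using k(1) unfolding id[symmetric] by (simp add: zero_le_mult_iff)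
qed

lemma Ep_nonneg:
  fixes c S t :: real
  assumes "0 \<le> c" "0 \<le> S" "1 < t" "t \<le> 2" "S \<le> c*(t-1)"
  shows "0 \<le> 9*c^3*(t-1)^2 + c^2*S*(t-1)*(7*t-16) + c*S^2*(t-1)*(t-9) + S^3*(2-t)"
proof -
  define k where "k = t - 1"
  have k: "0 < k" "k \<le> 1" "S \<le> c*k" using assms unfolding k_def by auto
  have id: "k*(9*c^3*(t-1)^2 + c^2*S*(t-1)*(7*t-16) + c*S^2*(t-1)*(t-9) + S^3*(2-t))
     = (c*k - S)*(9*(c*k)^2 + k*(7*(c*k) - S)*S + k^2*S^2)"
    unfolding k_def by algebra
  have "0 \<le> 7*(c*k) - S" using k assms by (smt (verit) mult_nonneg_nonneg)
  then have "0 \<le> 9*(c*k)^2 + k*(7*(c*k) - S)*S + k^2*S^2"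
    using k assms by (intro add_nonneg_nonneg mult_nonneg_nonneg) auto
  then have "0 \<le> (c*k - S)*(9*(c*k)^2 + k*(7*(c*k) - S)*S + k^2*S^2)"
    using k by simp
  then show ?thesis using k(1) unfolding id[symmetric] by (simp add: zero_le_mult_iff)
qed

lemma eC_core:
  fixes x y c t :: real
  assumes "0 \<le> c" "0 \<le> x" "0 \<le> y" "0 \<le> t" "t \<le> 2"
  shows "0 \<le> eC t (c+x) (c+y) c"
proof (cases "x + y = 0")
  case True
  then have "x = 0" "y = 0" using assms by auto
  moreover have "eC t c c c = 0" unfolding eC_expl by algebra
  ultimately show ?thesis by simp
next
  case False
  define S where "S = x + y"
  define k where "k = t - 1"
  have S: "0 < S" using False assms unfolding S_def by auto
  have xy: "0 \<le> 4*x*y*(x-y)^2" using assms by simp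
  have "0 \<le> 16*S^2*eC t (c+x) (c+y) c"
  proof (cases "t \<le> 1 \<or> c*(t-1) \<le> S")
    case True
    have E: "0 \<le> 4*(c^3*k^2 + c^2*S*k*(3*t-8) + c*S^2*(t-3)^2 + S^3*(2-t))"
      using Em_nonneg[of c S t] True assms S unfolding k_def by simp
    show ?thesis unfolding id_plus[of x y t c, folded S_def k_def]
      by (intro add_nonneg_nonneg mult_nonneg_nonneg[OF xy E]) (use S assms in simp_all)
  next
    case False
    have E: "0 \<le> 4*(9*c^3*k^2 + c^2*S*k*(7*t-16) + c*S^2*k*(t-9) + S^3*(2-t))"
      using Ep_nonneg[of c S t] False assms S unfolding k_def
      by (simp add: algebra_simps)
    show ?thesis unfolding id_minus[of x y t c, folded S_def k_def]
      by (intro add_nonneg_nonneg mult_nonneg_nonneg[OF xy E]) (use S assms in simp_all)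
  qed
  then show ?thesis using S by (simp add: zero_le_mult_iff)
qed

lemma eC_cyc: "eC t a b c = eC t b c a"
  unfolding eC_expl by algebra

lemma eC_nonneg:
  assumes "0 \<le> a" "0 \<le> b" "0 \<le> c" "0 \<le> t" "t \<le> 2"
  shows "0 \<le> eC t a b c"
proof -
  consider "c \<le> a \<and> c \<le> b" | "a \<le> b \<and> a \<le> c" | "b \<le> a \<and> b \<le> c" by linarith
  then show ?thesis
  proof cases
    case 1
    then show ?thesis using eC_core[of c "a-c" "b-c" t] assms by simp
  next
    case 2
    then show ?thesis using eC_core[of a "b-a" "c-a" t] assms eC_cyc[of t a b c] by simp
  next
    case 3
    then show ?thesis using eC_core[of b "c-b" "a-b" t] assms eC_cyc[of t c a b] eC_cyc[of t a b c] by simp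
  qed
qed

lemma eC_P: "0 \<le> t \<Longrightarrow> t \<le> 2 \<Longrightarrow> eC t \<in> P35splus"
  unfolding P35splus_def using eC_nonneg fc_H eC_fc by auto


lemma fc_result:
  assumes "f = fc c0 c1 c2 c3 c4" "f \<in> P35splus" "c4 = 0" "c2 = c0*t" "c1 = -c0*(t+1)" "c3 = c0*(t+1)^2"
  shows "\<exists>l\<ge>0. f = (\<lambda>a b c. l * eC t a b c)"
proof -
  have "0 \<le> f 0 0 1" by (rule P_nonneg[OF assms(2)]) auto
  then have "0 \<le> c0" using assms(1) fc_001 by simp
  then show ?thesis using assms fc_eC by blast
qed

lemma h_nonneg:
  assumes "f = fc c0 c1 c2 c3 c4" "f \<in> P35splus" "c4 = 0" "c2 = -c0-c1" "0 < a" "a \<noteq> 1"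
  shows "0 \<le> c0*(a+1)^2 + 2*c1*(a+1) + c3"
proof -
  have "0 \<le> f a 1 1" by (rule P_nonneg[OF assms(2)]) (use assms in auto)
  then have "0 \<le> a*(a-1)^2*(c0*(a+1)^2 + 2*c1*(a+1) + c3)"
    using fc_factor[OF assms(3,4)] assms(1) by simp
  moreover have "0 < a*(a-1)^2" using assms by simp
  ultimately show ?thesis by (simp add: zero_le_mult_iff)
qed

lemma uniq_t:
  assumes "0 < t" "t \<noteq> 1" "f \<in> P35splus" "f t 1 1 = 0" "f 1 1 1 = 0" "f 0 1 1 = 0"
  shows "\<exists>l\<ge>0. f = (\<lambda>a b c. l * eC t a b c)"
proof -
  obtain c0 c1 c2 c3 c4 where f: "f = fc c0 c1 c2 c3 c4" using H_fc[OF P_H[OF assms(3)]] by blast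
  have c4: "c4 = 0" using assms(5) f fc_111 by simp
  have c2: "c2 = -c0-c1" using assms(6) f fc_011 by simp
  define h where "h a = c0*(a+1)^2 + 2*c1*(a+1) + c3" for a
  define L where "L = 2*c0*(t+1) + 2*c1"
  have ht: "h t = 0"
  proof -
    have "t*(t-1)^2*h t = 0" using assms(4) fc_factor[OF c4 c2] f unfolding h_def by simp
    moreover have "t*(t-1)^2 \<noteq> 0" using assms by simp
    ultimately show ?thesis by simp
  qed
  define d where "d = min t \<bar>t-1\<bar>"
  have d: "0 < d" using assms unfolding d_def by auto
  have hp: "0 \<le> h a" if "0 < a" "a \<noteq> 1" for a
    using h_nonneg[OF f assms(3) c4 c2 that] unfolding h_def .
  have "\<forall>e. 0 < e \<and> e < d \<longrightarrow> 0 \<le> L + c0*e + 0*e^2"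
  proof (intro allI impI)
    fix e assume e: "0 < e \<and> e < d"
    have "t + e \<noteq> 1" "0 < t + e" using e assms unfolding d_def by (auto split: abs_split)
    then have "0 \<le> h (t+e)" by (rule hp[rotated])
    moreover have "h (t+e) = e*(L + c0*e)" using ht unfolding h_def L_def by algebra
    ultimately show "0 \<le> L + c0*e + 0*e^2" using e by (simp add: zero_le_mult_iff)
  qed
  then have L1: "0 \<le> L" by (rule lim0[OF d])
  have "\<forall>e. 0 < e \<and> e < d \<longrightarrow> 0 \<le> -L + c0*e + 0*e^2"
  proof (intro allI impI)
    fix e assume e: "0 < e \<and> e < d"
    have "t - e \<noteq> 1" "0 < t - e" using e assms unfolding d_def by (auto split: abs_split)
    then have "0 \<le> h (t-e)" by (rule hp[rotated])
    moreover have "h (t-e) = e*(-L + c0*e)" using ht unfolding h_def L_def by algebra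
    ultimately show "0 \<le> -L + c0*e + 0*e^2" using e by (simp add: zero_le_mult_iff)
  qed
  then have L2: "0 \<le> -L" by (rule lim0[OF d])
  have c1: "c1 = -c0*(t+1)" using L1 L2 unfolding L_def by simp
  have c3: "c3 = c0*(t+1)^2" using ht c1 unfolding h_def by algebra
  show ?thesis by (rule fc_result[OF f assms(3) c4 _ c1 c3]) (use c2 c1 in algebra)
qed

lemma uniq_1:
  assumes "f \<in> P35splus" "f = fc c0 c1 c2 c3 c4" "c4 = 0" "c2 = -c0-c1" "4*c0 + 4*c1 + c3 = 0"
  shows "\<exists>l\<ge>0. f = (\<lambda>a b c. l * eC 1 a b c)"
proof -
  define h where "h a = c0*(a+1)^2 + 2*c1*(a+1) + c3" for a
  define L where "L = 4*c0 + 2*c1"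
  have hp: "0 \<le> h a" if "0 < a" "a \<noteq> 1" for a
    using h_nonneg[OF assms(2,1,3,4) that] unfolding h_def .
  have "\<forall>e. 0 < e \<and> e < 1 \<longrightarrow> 0 \<le> L + c0*e + 0*e^2"
  proof (intro allI impI)
    fix e :: real assume e: "0 < e \<and> e < 1"
    have "0 \<le> h (1+e)" using e by (intro hp) auto
    moreover have "h (1+e) = e*(L + c0*e)" using assms(5) unfolding h_def L_def by algebra
    ultimately show "0 \<le> L + c0*e + 0*e^2" using e by (simp add: zero_le_mult_iff)
  qed
  then have L1: "0 \<le> L" by (rule lim0[OF zero_less_one])
  have "\<forall>e. 0 < e \<and> e < 1 \<longrightarrow> 0 \<le> -L + c0*e + 0*e^2"
  proof (intro allI impI)
    fix e :: real assume e: "0 < e \<and> e < 1"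
    have "0 \<le> h (1-e)" using e by (intro hp) auto
    moreover have "h (1-e) = e*(-L + c0*e)" using assms(5) unfolding h_def L_def by algebra
    ultimately show "0 \<le> -L + c0*e + 0*e^2" using e by (simp add: zero_le_mult_iff)
  qed
  then have L2: "0 \<le> -L" by (rule lim0[OF zero_less_one])
  have c1: "c1 = -c0*(1+1)" using L1 L2 unfolding L_def by simp
  have c3: "c3 = c0*(1+1)^2" using assms(5) c1 by algebra
  show ?thesis by (rule fc_result[OF assms(2,1,3) _ c1 c3]) (use assms(4) c1 in algebra)
qed

lemma deriv1:
  "deriv (\<lambda>a. fc c0 c1 c2 c3 c4 a 1 1) = (\<lambda>a. c0*(5*a^4-4*a-1) + c1*(8*a^3-8*a) + c2*(6*a^2-4*a-2) + c3*(3*a^2-4*a+1) + c4*(4*a+1))"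
proof
  fix x
  show "deriv (\<lambda>a. fc c0 c1 c2 c3 c4 a 1 1) x = c0*(5*x^4-4*x-1) + c1*(8*x^3-8*x) + c2*(6*x^2-4*x-2) + c3*(3*x^2-4*x+1) + c4*(4*x+1)"
    unfolding fc_a11
    by (rule DERIV_imp_deriv) (rule derivative_eq_intros refl | simp add: algebra_simps)+
qed

lemma deriv2:
  "deriv (\<lambda>x. deriv (\<lambda>a. fc c0 c1 c2 c3 c4 a 1 1) x) = (\<lambda>a. c0*(20*a^3-4) + c1*(24*a^2-8) + c2*(12*a-4) + c3*(6*a-4) + 4*c4)"
proof
  fix x
  show "deriv (\<lambda>x. deriv (\<lambda>a. fc c0 c1 c2 c3 c4 a 1 1) x) x = c0*(20*x^3-4) + c1*(24*x^2-8) + c2*(12*x-4) + c3*(6*x-4) + 4*c4"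
    unfolding deriv1
    by (rule DERIV_imp_deriv) (rule derivative_eq_intros refl | simp add: algebra_simps)+
qed


lemma eC_a11: "eC t a 1 1 = a*(a-1)^2*(a-t)^2"
  unfolding eC_expl by simp algebra

lemma below_eC:
  assumes "0 \<le> t" "t \<le> 2" "g \<in> P35splus"
    and le: "\<forall>a b c. 0 \<le> a \<longrightarrow> 0 \<le> b \<longrightarrow> 0 \<le> c \<longrightarrow> g a b c \<le> eC t a b c"
  shows "\<exists>l\<ge>0. g = (\<lambda>a b c. l * eC t a b c)"
proof -
  have z: "g a 1 1 = 0" if "eC t a 1 1 = 0" "0 \<le> a" for a
  proof -
    have "g a 1 1 \<le> eC t a 1 1" using le[rule_format, of a 1 1] that by simp
    moreover have "0 \<le> g a 1 1" using P_nonneg[OF assms(3), of a 1 1] that by simp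
    ultimately show ?thesis using that by simp
  qed
  have g111: "g 1 1 1 = 0" by (rule z) (simp_all add: eC_a11)
  have g011: "g 0 1 1 = 0" by (rule z) (simp_all add: eC_a11)
  obtain c0 c1 c2 c3 c4 where f: "g = fc c0 c1 c2 c3 c4" using H_fc[OF P_H[OF assms(3)]] by blast
  have c4: "c4 = 0" using g111 f fc_111 by simp
  have c2: "c2 = -c0-c1" using g011 f fc_011 by simp
  define h where "h a = c0*(a+1)^2 + 2*c1*(a+1) + c3" for a
  have hp: "0 \<le> h a" if "0 < a" "a \<noteq> 1" for a
    using h_nonneg[OF f assms(3) c4 c2 that] unfolding h_def .
  have hle: "h a \<le> (a-t)^2" if "0 < a" "a \<noteq> 1" for a
  proof -
    have "a*(a-1)^2*h a \<le> a*(a-1)^2*(a-t)^2"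
      using le[rule_format, of a 1 1] that fc_factor[OF c4 c2, where a=a] f eC_a11[of t a] unfolding h_def by simp
    moreover have "0 < a*(a-1)^2" using that by simp
    ultimately show ?thesis using mult_le_cancel_left_pos by blast
  qed
  consider "t = 0" | "t = 1" | "0 < t \<and> t \<noteq> 1" using assms by linarith
  then show ?thesis
  proof cases
    case 1
    define A where "A = c0 + 2*c1 + c3"
    define B where "B = 2*c0 + 2*c1"
    have hA: "h e = A + B*e + c0*e^2" for e unfolding h_def A_def B_def by algebra
    have "\<forall>e. 0 < e \<and> e < 1 \<longrightarrow> 0 \<le> A + B*e + c0*e^2" using hp hA by auto
    then have A1: "0 \<le> A" by (rule lim0[OF zero_less_one])
    have "\<forall>e. 0 < e \<and> e < 1 \<longrightarrow> 0 \<le> -A + (-B)*e + (1-c0)*e^2"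
    proof (intro allI impI)
      fix e :: real assume e: "0 < e \<and> e < 1"
      then have "h e \<le> e^2" using hle[of e] 1 by simp
      then show "0 \<le> -A + (-B)*e + (1-c0)*e^2" using hA[of e] by (simp add: algebra_simps)
    qed
    then have A2: "0 \<le> -A" by (rule lim0[OF zero_less_one])
    have A0: "A = 0" using A1 A2 by simp
    have "\<forall>e. 0 < e \<and> e < 1 \<longrightarrow> 0 \<le> B + c0*e + 0*e^2"
    proof (intro allI impI)
      fix e :: real assume e: "0 < e \<and> e < 1"
      then have "0 \<le> e*(B + c0*e)" using hp[of e] hA[of e] A0 by (simp add: algebra_simps power2_eq_square)
      then show "0 \<le> B + c0*e + 0*e^2" using e by (simp add: zero_le_mult_iff)
    qed
    then have B1: "0 \<le> B" by (rule lim0[OF zero_less_one])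
    have "\<forall>e. 0 < e \<and> e < 1 \<longrightarrow> 0 \<le> -B + (1-c0)*e + 0*e^2"
    proof (intro allI impI)
      fix e :: real assume e: "0 < e \<and> e < 1"
      then have "h e \<le> e^2" using hle[of e] 1 by simp
      then have "0 \<le> e*(-B + (1-c0)*e)" using hA[of e] A0 by (simp add: algebra_simps power2_eq_square)
      then show "0 \<le> -B + (1-c0)*e + 0*e^2" using e by (simp add: zero_le_mult_iff)
    qed
    then have B2: "0 \<le> -B" by (rule lim0[OF zero_less_one])
    have c1: "c1 = -c0*(t+1)" using B1 B2 1 unfolding B_def by simp
    have c3: "c3 = c0*(t+1)^2" using A0 c1 1 unfolding A_def by simp
    show ?thesis by (rule fc_result[OF f assms(3) c4 _ c1 c3]) (use c2 c1 1 in simp)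
  next
    case 2
    define H where "H = 4*c0 + 4*c1 + c3"
    define L where "L = 4*c0 + 2*c1"
    have hH: "h (1+e) = H + L*e + c0*e^2" for e unfolding h_def H_def L_def by algebra
    have "\<forall>e. 0 < e \<and> e < 1 \<longrightarrow> 0 \<le> H + L*e + c0*e^2"
    proof (intro allI impI)
      fix e :: real assume "0 < e \<and> e < 1"
      then have "0 \<le> h (1+e)" by (intro hp) auto
      then show "0 \<le> H + L*e + c0*e^2" using hH[of e] by simp
    qed
    then have H1: "0 \<le> H" by (rule lim0[OF zero_less_one])
    have "\<forall>e. 0 < e \<and> e < 1 \<longrightarrow> 0 \<le> -H + (-L)*e + (1-c0)*e^2"
    proof (intro allI impI)
      fix e :: real assume e: "0 < e \<and> e < 1"
      then have "h (1+e) \<le> e^2" using hle[of "1+e"] 2 by simp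
      then show "0 \<le> -H + (-L)*e + (1-c0)*e^2" using hH[of e] by (simp add: algebra_simps)
    qed
    then have H2: "0 \<le> -H" by (rule lim0[OF zero_less_one])
    have "4*c0 + 4*c1 + c3 = 0" using H1 H2 unfolding H_def by simp
    from uniq_1[OF assms(3) f c4 c2 this] show ?thesis using 2 by simp
  next
    case 3
    have "g t 1 1 = 0" by (rule z) (use assms in \<open>simp_all add: eC_a11\<close>)
    from uniq_t[OF _ _ assms(3) this g111 g011] 3 show ?thesis by simp
  qed
qed

lemma extremal: "0 \<le> t \<Longrightarrow> t \<le> 2 \<Longrightarrow> eC t \<in> extremals P35splus"
proof -
  assume t: "0 \<le> t" "t \<le> 2"
  have P: "eC t \<in> P35splus" by (rule eC_P[OF t])
  have nz: "eC t \<noteq> (\<lambda>a b c. 0)"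
  proof
    assume "eC t = (\<lambda>a b c. 0)"
    then have "eC t 0 0 1 = 0" by simp
    then show False unfolding eC_expl by simp
  qed
  have dec: "(\<exists>l\<ge>0. g = (\<lambda>a b c. l * eC t a b c)) \<and> (\<exists>l\<ge>0. h = (\<lambda>a b c. l * eC t a b c))"
    if g: "g \<in> P35splus" and h: "h \<in> P35splus" and e: "eC t = (\<lambda>a b c. g a b c + h a b c)" for g h
  proof
    show "\<exists>l\<ge>0. g = (\<lambda>a b c. l * eC t a b c)"
      by (rule below_eC[OF t g]) (use P_nonneg[OF h] e in auto)
    show "\<exists>l\<ge>0. h = (\<lambda>a b c. l * eC t a b c)"
      by (rule below_eC[OF t h]) (use P_nonneg[OF g] e in auto)
  qed
  show ?thesis unfolding extremals_def using P nz dec by blast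
qed

lemma part3:
  assumes "f \<in> P35splus" "f 1 1 1 = 0" "f 0 1 1 = 0" "deriv (\<lambda>a. f a 1 1) 0 = 0"
    "deriv (\<lambda>x. deriv (\<lambda>a. f a 1 1) x) 0 = 0"
  shows "\<exists>l\<ge>0. f = (\<lambda>a b c. l * eC 0 a b c)"
proof -
  obtain c0 c1 c2 c3 c4 where f: "f = fc c0 c1 c2 c3 c4" using H_fc[OF P_H[OF assms(1)]] by blast
  have c4: "c4 = 0" using assms(2) f fc_111 by simp
  have c2: "c2 = -c0-c1" using assms(3) f fc_011 by simp
  have d1: "-c0 - 2*c2 + c3 + c4 = 0" using assms(4) unfolding f deriv1 by simp
  have d2: "-4*c0 - 8*c1 - 4*c2 - 4*c3 + 4*c4 = 0" using assms(5) unfolding f deriv2 by simp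
  have c1: "c1 = -c0*(0+1)" using d1 d2 c2 c4 by simp
  have c3: "c3 = c0*(0+1)^2" using d1 d2 c2 c4 by simp
  show ?thesis by (rule fc_result[OF f assms(1) c4 _ c1 c3]) (use c2 c1 in simp)
qed

lemma part4:
  assumes "f \<in> P35splus" "f 0 1 1 = 0" "f 1 1 1 = 0"
    "deriv (\<lambda>x. deriv (\<lambda>a. f a 1 1) x) 1 = 0"
  shows "\<exists>l\<ge>0. f = (\<lambda>a b c. l * eC 1 a b c)"
proof -
  obtain c0 c1 c2 c3 c4 where f: "f = fc c0 c1 c2 c3 c4" using H_fc[OF P_H[OF assms(1)]] by blast
  have c4: "c4 = 0" using assms(3) f fc_111 by simp
  have c2: "c2 = -c0-c1" using assms(2) f fc_011 by simp
  have d2: "16*c0 + 16*c1 + 8*c2 + 2*c3 + 4*c4 = 0" using assms(4) unfolding f deriv2 by simp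
  have "4*c0 + 4*c1 + c3 = 0" using d2 c2 c4 by simp
  from uniq_1[OF assms(1) f c4 c2 this] show ?thesis .
qed

theorem theorem4p3:
  shows "(\<forall>t::real. 0 \<le> t \<and> t \<le> 2 \<longrightarrow> eC t \<in> extremals P35splus)
   \<and> (\<forall>(t::real) f. 0 < t \<and> t \<le> 2 \<and> t \<noteq> 1 \<and> f \<in> P35splus
        \<and> f t 1 1 = 0 \<and> f 1 1 1 = 0 \<and> f 0 1 1 = 0
        \<longrightarrow> (\<exists>l\<ge>0. f = (\<lambda>a b c. l * eC t a b c)))
   \<and> (\<forall>f. f \<in> P35splus \<and> f 1 1 1 = 0 \<and> f 0 1 1 = 0
        \<and> deriv (\<lambda>a. f a 1 1) 0 = 0
        \<and> deriv (\<lambda>x. deriv (\<lambda>a. f a 1 1) x) 0 = 0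
        \<longrightarrow> (\<exists>l\<ge>0. f = (\<lambda>a b c. l * eC 0 a b c)))
   \<and> (\<forall>f. f \<in> P35splus \<and> f 0 1 1 = 0 \<and> f 1 1 1 = 0
        \<and> deriv (\<lambda>x. deriv (\<lambda>a. f a 1 1) x) 1 = 0
        \<longrightarrow> (\<exists>l\<ge>0. f = (\<lambda>a b c. l * eC 1 a b c)))"
  using extremal uniq_t part3 part4 by blast

end
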